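(* Let $\{v_\ell\}_{\ell\ge1}$ be a sequence in the open unit disk $\mathbb{D}$ with $v_\ell\to0$. For each strictly increasing sequence of nonnegative integers $\{N_\ell\}_{\ell\ge1}$ let $\mu$ be the probability measure on $\partial\mathbb{D}$ whose Verblunsky coefficients are $\alpha_n=v_\ell$ if $n=N_\ell$ and $\alpha_n=0$ otherwise, and let $K_n$ be its Christoffel–Darboux kernel. Then the sequence $\{N_\ell\}$ can be chosen sufficiently sparse, in the following sense: for every $\ell$ there is an integer $\widehat N_\ell$ (depending on $N_1,\dots,N_\ell$ and on $\{v_\ell\}$) such that whenever $N_{\ell+1}>\widehat N_\ell$ for all $\ell$, one has $$\frac{K_n\big(e^{i(\theta+\frac{2\pi a}{n})},e^{i(\theta+\frac{2\pi b}{n})}\big)}{K_n(e^{i\theta},e^{i\theta})}\longrightarrow e^{i\pi(a-\bar b)}\frac{\sin(\pi(a-\bar b))}{\pi(a-\bar b)}\quad(n\to\infty)$$ uniformly for $\theta\in[0,2\pi)$ and for $a,b$ in compact subsets of the strip $\{w\in\mathbb{C}:|\mathrm{Im}\,w|<\tfrac12\}$.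
   Context: A probability measure $\mu$ on $\partial\mathbb{D}$ with infinite support is in bijection with its Verblunsky coefficients $\{\alpha_n\}_{n\ge0}\subset\mathbb{D}$, defined via the Szegő recursion $\varphi_{n+1}(z)=\rho_n^{-1}(z\varphi_n(z)-\overline{\alpha_n}\varphi_n^*(z))$, $\varphi_0=1$, $\rho_n=\sqrt{1-|\alpha_n|^2}$, $\varphi_n^*(z)=z^n\overline{\varphi_n(1/\bar z)}$, where $\varphi_n$ are the orthonormal polynomials of $\mu$. The Christoffel–Darboux kernel is $K_n(z,w)=\sum_{k=0}^{n-1}\varphi_k(z)\overline{\varphi_k(w)}$ for complex $z,w$. The right-hand side is interpreted as $1$ when $a-\bar b=0$. *)

theory Defs
  imports "HOL-Analysis.Analysis" "HOL-Computational_Algebra.Polynomial"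
begin

text \<open>Reversed polynomial: for a polynomial p of degree at most n,
  rev_star n p is the polynomial z \<mapsto> z^n * cnj (p (1 / cnj z)).\<close>
definition rev_star :: "nat \<Rightarrow> complex poly \<Rightarrow> complex poly" where
  "rev_star n p = (\<Sum>k\<le>n. monom (cnj (coeff p (n - k))) k)"

text \<open>Orthonormal polynomials on the unit circle generated by the Szego recursion
  from the Verblunsky coefficients alpha.\<close>
fun OPUC :: "(nat \<Rightarrow> complex) \<Rightarrow> nat \<Rightarrow> complex poly" where
  "OPUC \<alpha> 0 = 1"
| "OPUC \<alpha> (Suc n) =
     smult (1 / complex_of_real (sqrt (1 - (cmod (\<alpha> n))\<^sup>2)))
       (monom 1 1 * OPUC \<alpha> n - smult (cnj (\<alpha> n)) (rev_star n (OPUC \<alpha> n)))"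

definition CD_kernel :: "(nat \<Rightarrow> complex) \<Rightarrow> nat \<Rightarrow> complex \<Rightarrow> complex \<Rightarrow> complex" where
  "CD_kernel \<alpha> n z w = (\<Sum>k<n. poly (OPUC \<alpha> k) z * cnj (poly (OPUC \<alpha> k) w))"

definition sparse_verblunsky :: "(nat \<Rightarrow> complex) \<Rightarrow> (nat \<Rightarrow> nat) \<Rightarrow> nat \<Rightarrow> complex" where
  "sparse_verblunsky v N n =
     (if \<exists>l\<ge>1. N l = n then v (THE l. 1 \<le> l \<and> N l = n) else 0)"

definition sine_kernel :: "complex \<Rightarrow> complex" where
  "sine_kernel (z::complex) = (if z = 0 then 1
     else exp (\<i> * pi * z) * sin (of_real pi * z) / (of_real pi * z))"

end

theory Submission
  imports Defs
begin


lemma degree_rev_star: "degree (rev_star n p) \<le> n"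
  unfolding rev_star_def
  by (rule degree_sum_le) (auto intro: order.trans[OF degree_monom_le])

lemma poly_ext_sum:
  fixes p :: "complex poly"
  assumes "degree p \<le> n"
  shows "poly p x = (\<Sum>i\<le>n. coeff p i * x ^ i)"
proof -
  have "poly p x = (\<Sum>i\<le>degree p. coeff p i * x ^ i)" by (simp add: poly_altdef)
  also have "\<dots> = (\<Sum>i\<le>n. coeff p i * x ^ i)"
    by (rule sum.mono_neutral_left) (use assms le_degree in auto)
  finally show ?thesis .
qed

lemma poly_rev_star:
  assumes "degree p \<le> n" "z \<noteq> 0"
  shows "poly (rev_star n p) z = z ^ n * cnj (poly p (1 / cnj z))"
proof -
  have "poly (rev_star n p) z = (\<Sum>k\<le>n. cnj (coeff p (n - k)) * z ^ k)"
    unfolding rev_star_def by (simp add: poly_sum poly_monom)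
  also have "\<dots> = (\<Sum>i\<le>n. cnj (coeff p i) * z ^ (n - i))"
    by (rule sum.reindex_bij_witness[where i="\<lambda>i. n - i" and j="\<lambda>i. n - i"]) auto
  also have "\<dots> = (\<Sum>i\<le>n. z ^ n * (cnj (coeff p i) * (1 / z) ^ i))"
    by (rule sum.cong) (use assms in \<open>auto simp: power_diff field_simps\<close>)
  also have "\<dots> = z ^ n * cnj (poly p (1 / cnj z))"
    by (simp add: poly_ext_sum[OF assms(1)] sum_distrib_left)
  finally show ?thesis .
qed

lemma degree_OPUC: "degree (OPUC \<alpha> k) \<le> k"
proof (induction k)
  case 0 then show ?case by simp
next
  case (Suc k)
  have h1: "degree (monom 1 1 * OPUC \<alpha> k) \<le> Suc k"
    using Suc by (metis degree_mult_le degree_monom_le add_mono plus_1_eq_Suc order.trans)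
  have h2: "degree (smult (cnj (\<alpha> k)) (rev_star k (OPUC \<alpha> k))) \<le> Suc k"
    using degree_rev_star[of k] by (metis degree_smult_le le_SucI order.trans)
  have "degree (monom 1 1 * OPUC \<alpha> k - smult (cnj (\<alpha> k)) (rev_star k (OPUC \<alpha> k))) \<le> Suc k"
    by (rule degree_diff_le[OF h1 h2])
  then show ?case
    by (simp only: OPUC.simps(2)) (meson degree_smult_le order.trans)
qed

definition gfun :: "(nat \<Rightarrow> complex) \<Rightarrow> nat \<Rightarrow> complex \<Rightarrow> complex" where
  "gfun \<alpha> k x = poly (OPUC \<alpha> k) x / x ^ k"

definition rho :: "complex \<Rightarrow> real" where "rho a = sqrt (1 - (cmod a)\<^sup>2)"

lemma gfun_Suc:
  assumes "x \<noteq> 0"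
  shows "gfun \<alpha> (Suc k) x =
     (gfun \<alpha> k x - cnj (\<alpha> k) * cnj (gfun \<alpha> k (1 / cnj x)) / x ^ Suc k) / complex_of_real (rho (\<alpha> k))"
proof -
  have cx: "cnj x \<noteq> 0" using assms by simp
  have r: "poly (rev_star k (OPUC \<alpha> k)) x = cnj (gfun \<alpha> k (1 / cnj x))"
    unfolding poly_rev_star[OF degree_OPUC assms] gfun_def
    using assms by (simp add: field_simps)
  show ?thesis
    unfolding gfun_def rho_def
    using r[unfolded gfun_def] assms by (simp add: field_simps poly_monom)
qed


lemma rho_0[simp]: "rho 0 = 1" by (simp add: rho_def)

lemma rho_pos: "cmod a < 1 \<Longrightarrow> rho a > 0"
  unfolding rho_def by (simp add: abs_square_less_1)

lemma rho_le1: "rho a \<le> 1"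
  unfolding rho_def by simp

lemma rho_ge: "cmod a \<le> 1 \<Longrightarrow> rho a \<ge> 1 - cmod a"
proof -
  assume a: "cmod a \<le> 1"
  have "(1 - cmod a)\<^sup>2 \<le> 1 - (cmod a)\<^sup>2" using a norm_ge_zero[of a]
    by (simp add: power2_eq_square algebra_simps mult_left_le)
  then have "sqrt ((1 - cmod a)\<^sup>2) \<le> rho a" unfolding rho_def using real_sqrt_le_mono by blast
  then show ?thesis using a by simp
qed

lemma gfun_0[simp]: "gfun \<alpha> 0 x = 1" by (simp add: gfun_def)

lemma gfun_const:
  assumes "\<forall>j. m \<le> j \<and> j < k \<longrightarrow> \<alpha> j = 0" "m \<le> k" "x \<noteq> 0"
  shows "gfun \<alpha> k x = gfun \<alpha> m x"
  using assms
proof (induction k)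
  case 0 then show ?case by simp
next
  case (Suc k)
  show ?case
  proof (cases "m = Suc k")
    case False
    then have "gfun \<alpha> k x = gfun \<alpha> m x" using Suc by auto
    moreover have "\<alpha> k = 0" using Suc False by auto
    ultimately show ?thesis using gfun_Suc[OF Suc.prems(3), of \<alpha> k] by simp
  qed simp
qed

lemma OPUC_cong: "(\<forall>j<k. \<alpha> j = \<beta> j) \<Longrightarrow> OPUC \<alpha> k = OPUC \<beta> k"
  by (induction k) auto

lemma gfun_cong: "(\<forall>j<k. \<alpha> j = \<beta> j) \<Longrightarrow> gfun \<alpha> k = gfun \<beta> k"
  using OPUC_cong[of k \<alpha> \<beta>] by (simp add: gfun_def fun_eq_iff)

lemma CD_kernel_g:
  assumes "z \<noteq> 0" "w \<noteq> 0"
  shows "CD_kernel \<alpha> n z w = (\<Sum>k<n. (z * cnj w) ^ k * (gfun \<alpha> k z * cnj (gfun \<alpha> k w)))"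
  unfolding CD_kernel_def gfun_def using assms
  by (intro sum.cong) (auto simp: field_simps power_mult_distrib)

definition lowb :: "(nat \<Rightarrow> complex) \<Rightarrow> nat \<Rightarrow> real" where
  "lowb \<alpha> k = (\<Prod>j<k. 1 - cmod (\<alpha> j))"

definition upb :: "(nat \<Rightarrow> complex) \<Rightarrow> real \<Rightarrow> nat \<Rightarrow> real" where
  "upb \<alpha> E k = (\<Prod>j<k. (1 + cmod (\<alpha> j) * E) / rho (\<alpha> j))"

lemma lowb_pos: "\<forall>j<k. cmod (\<alpha> j) < 1 \<Longrightarrow> lowb \<alpha> k > 0"
  unfolding lowb_def by (intro prod_pos) auto

lemma circle_inv: "cmod z = 1 \<Longrightarrow> 1 / cnj z = z"
  by (metis complex_norm_square div_by_1 divide_divide_eq_right mult_cancel_right1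
      nonzero_mult_div_cancel_right norm_eq_zero one_power2 zero_neq_one of_real_1 complex_cnj_zero_iff)

lemma gfun_lower:
  assumes "\<forall>j<k. cmod (\<alpha> j) < 1" "cmod z = 1"
  shows "lowb \<alpha> k \<le> cmod (gfun \<alpha> k z)"
  using assms(1)
proof (induction k)
  case 0 then show ?case by (simp add: lowb_def)
next
  case (Suc k)
  let ?a = "\<alpha> k" let ?g = "gfun \<alpha> k z"
  have z0: "z \<noteq> 0" using assms(2) by auto
  have a1: "cmod ?a < 1" using Suc by auto
  have IH: "lowb \<alpha> k \<le> cmod ?g" using Suc by auto
  have r0: "rho ?a > 0" by (rule rho_pos[OF a1])
  have eq: "gfun \<alpha> (Suc k) z = (?g - cnj ?a * cnj ?g / z ^ Suc k) / complex_of_real (rho ?a)"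
    using gfun_Suc[OF z0, of \<alpha> k] circle_inv[OF assms(2)] by simp
  have n1: "cmod (cnj ?a * cnj ?g / z ^ Suc k) = cmod ?a * cmod ?g"
    using assms(2) by (simp add: norm_divide norm_mult norm_power)
  have "cmod (?g - cnj ?a * cnj ?g / z ^ Suc k) \<ge> cmod ?g - cmod ?a * cmod ?g"
    using norm_triangle_ineq2[of ?g "cnj ?a * cnj ?g / z ^ Suc k"] n1 by linarith
  then have "cmod (gfun \<alpha> (Suc k) z) \<ge> (1 - cmod ?a) * cmod ?g / rho ?a"
    unfolding eq using r0 by (simp add: norm_divide divide_right_mono algebra_simps)
  moreover have "(1 - cmod ?a) * cmod ?g / rho ?a \<ge> (1 - cmod ?a) * cmod ?g"
    using r0 rho_le1[of ?a] a1
    by (simp add: le_divide_eq mult_left_le)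
  moreover have "(1 - cmod ?a) * cmod ?g \<ge> (1 - cmod ?a) * lowb \<alpha> k"
    using IH a1 by (intro mult_left_mono) auto
  ultimately show ?case by (simp add: lowb_def mult.commute)
qed


lemma pow_le_E:
  fixes t E :: real
  assumes "t > 0" "t ^ Suc k \<le> E" "E \<ge> 1"
  shows "t ^ k \<le> E"
proof (cases "t \<ge> 1")
  case True
  then have "t ^ k \<le> t ^ Suc k" by (simp add: power_increasing)
  then show ?thesis using assms by linarith
next
  case False
  then have "t ^ k \<le> 1" using assms(1) by (simp add: power_le_one)
  then show ?thesis using assms by linarith
qed

lemma upb_Suc: "upb \<alpha> E (Suc k) = upb \<alpha> E k * ((1 + cmod (\<alpha> k) * E) / rho (\<alpha> k))"
  by (simp add: upb_def)

lemma gfun_upper: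
  assumes "\<forall>j<k. cmod (\<alpha> j) < 1" "E \<ge> 1" "x \<noteq> 0" "cmod x ^ k \<le> E" "(1 / cmod x) ^ k \<le> E"
  shows "cmod (gfun \<alpha> k x) \<le> upb \<alpha> E k"
  using assms(1,3-)
proof (induction k arbitrary: x)
  case 0 then show ?case by (simp add: upb_def)
next
  case (Suc k)
  let ?a = "\<alpha> k" let ?y = "1 / cnj x"
  have a1: "cmod ?a < 1" using Suc by auto
  have r0: "rho ?a > 0" by (rule rho_pos[OF a1])
  have xp: "cmod x > 0" using Suc by auto
  have y0: "?y \<noteq> 0" using Suc by auto
  have ny: "cmod ?y = 1 / cmod x" by (simp add: norm_divide)
  have k1: "cmod x ^ k \<le> E" using pow_le_E[OF xp Suc.prems(3) assms(2)] .
  have k2: "(1 / cmod x) ^ k \<le> E" using pow_le_E[of "1/cmod x", OF _ Suc.prems(4) assms(2)] xp by simp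
  have Ix: "cmod (gfun \<alpha> k x) \<le> upb \<alpha> E k" using Suc k1 k2 by auto
  have Iy: "cmod (gfun \<alpha> k ?y) \<le> upb \<alpha> E k" using Suc.IH[of ?y] Suc.prems k1 k2 y0 ny by auto
  have inv: "1 / cmod x ^ Suc k \<le> E" using Suc.prems(4) by (simp add: power_one_over)
  have "cmod (cnj ?a * cnj (gfun \<alpha> k ?y) / x ^ Suc k)
        = cmod ?a * cmod (gfun \<alpha> k ?y) * (1 / cmod x ^ Suc k)"
    by (simp add: norm_divide norm_mult norm_power)
  also have "\<dots> \<le> cmod ?a * upb \<alpha> E k * E"
  proof -
    have u0: "0 \<le> upb \<alpha> E k" using Iy norm_ge_zero[of "gfun \<alpha> k ?y"] by linarith
    show ?thesis using Iy inv u0 by (intro mult_mono mult_left_mono) auto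
  qed
  finally have t2: "cmod (cnj ?a * cnj (gfun \<alpha> k ?y) / x ^ Suc k) \<le> cmod ?a * upb \<alpha> E k * E" .
  have "cmod (gfun \<alpha> k x - cnj ?a * cnj (gfun \<alpha> k ?y) / x ^ Suc k) \<le> upb \<alpha> E k + cmod ?a * upb \<alpha> E k * E"
    using norm_triangle_ineq4[of "gfun \<alpha> k x" "cnj ?a * cnj (gfun \<alpha> k ?y) / x ^ Suc k"] Ix t2 by linarith
  then have "cmod (gfun \<alpha> (Suc k) x) \<le> (upb \<alpha> E k + cmod ?a * upb \<alpha> E k * E) / rho ?a"
    unfolding gfun_Suc[OF Suc.prems(2)] using r0 by (simp add: norm_divide divide_right_mono)
  then show ?case by (simp add: upb_Suc algebra_simps)
qed

lemma upb_mono: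
  assumes "\<forall>j<k'. cmod (\<alpha> j) < 1" "E \<ge> 0" "k \<le> k'"
  shows "upb \<alpha> E k \<le> upb \<alpha> E k'"
  using assms
proof (induction k')
  case 0 then show ?case by simp
next
  case (Suc k')
  show ?case
  proof (cases "k = Suc k'")
    case False
    then have h: "upb \<alpha> E k \<le> upb \<alpha> E k'" using Suc by auto
    have a1: "cmod (\<alpha> k') < 1" using Suc by auto
    have f: "(1 + cmod (\<alpha> k') * E) / rho (\<alpha> k') \<ge> 1"
      using rho_pos[OF a1] rho_le1[of "\<alpha> k'"] Suc.prems(2)
      by (simp add: le_divide_eq) (smt (verit) mult_nonneg_nonneg norm_ge_zero)
    have "upb \<alpha> E k' \<ge> 0" unfolding upb_def
      using rho_pos Suc.prems(1) Suc.prems(2) by (intro prod_nonneg) (auto intro!: divide_nonneg_pos add_nonneg_nonneg)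
    then have "upb \<alpha> E k' * 1 \<le> upb \<alpha> E (Suc k')" using f unfolding upb_Suc
      using mult_left_mono[OF f] by simp
    then have "upb \<alpha> E k' \<le> upb \<alpha> E (Suc k')" by simp
    then show ?thesis using h by linarith
  qed simp
qed





lemma alg1: "(A::complex) * ((A - B) / c) / d = (A * A - A * B) / (c * d)"
  by (simp add: field_simps)

lemma alg2: "(q::complex) \<noteq> 1 \<Longrightarrow> t \<noteq> 0 \<Longrightarrow> (n::complex) \<noteq> 0 \<Longrightarrow>
   (1 - E) / (1 - q) * ((q - 1) / (t / n)) = n * ((E - 1) / t)"
  by (simp add: field_simps)

definition Ef :: "complex \<Rightarrow> complex" where
  "Ef t = (if t = 0 then 1 else (exp t - 1) / t)"

lemma sine_kernel_Ef: "sine_kernel s = Ef (2 * complex_of_real pi * \<i> * s)"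
proof (cases "s = 0")
  case True then show ?thesis by (simp add: sine_kernel_def Ef_def)
next
  case False
  have e: "exp (\<i> * pi * s) * exp (\<i> * pi * s) = exp (2 * complex_of_real pi * \<i> * s)"
  proof -
    have "exp (\<i> * pi * s) * exp (\<i> * pi * s) = exp (\<i> * pi * s + \<i> * pi * s)"
      by (rule exp_add[symmetric])
    moreover have "\<i> * pi * s + \<i> * pi * s = 2 * complex_of_real pi * \<i> * s" by (simp add: algebra_simps)
    ultimately show ?thesis by (simp only:)
  qed
  have e2: "exp (\<i> * pi * s) * exp (- (\<i> * pi * s)) = 1"
    by (simp only: exp_add[symmetric] right_minus exp_zero)
  have "sine_kernel s = exp (\<i> * pi * s) * ((exp (\<i> * pi * s) - exp (- (\<i> * pi * s))) / (2 * \<i>)) / (pi * s)"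
    using False unfolding sine_kernel_def sin_exp_eq by (simp add: mult.assoc)
  also have "\<dots> = (exp (\<i> * pi * s) * exp (\<i> * pi * s) - exp (\<i> * pi * s) * exp (- (\<i> * pi * s))) / ((2 * \<i>) * (pi * s))"
    by (rule alg1)
  also have "\<dots> = (exp (2 * complex_of_real pi * \<i> * s) - 1) / ((2 * \<i>) * (pi * s))"
    by (simp only: e e2)
  finally have fin: "sine_kernel s = (exp (2 * complex_of_real pi * \<i> * s) - 1) / ((2 * \<i>) * (pi * s))" .
  have "(2 * \<i>) * (complex_of_real pi * s) = 2 * complex_of_real pi * \<i> * s" by (simp only: mult_ac)
  moreover have "2 * complex_of_real pi * \<i> * s \<noteq> 0" using False by simp
  ultimately show ?thesis unfolding Ef_def using fin by simp
qed

lemma geom_Ef: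
  assumes "n > 0"
  shows "(\<Sum>k<n. exp (t / of_nat n) ^ k) * Ef (t / of_nat n) = of_nat n * Ef t"
proof (cases "t = 0")
  case True then show ?thesis by (simp add: Ef_def)
next
  case False
  let ?q = "exp (t / of_nat n)"
  have qn: "?q ^ n = exp t" using assms by (simp flip: exp_of_nat_mult)
  have tn: "t / of_nat n \<noteq> 0" using False assms by simp
  show ?thesis
  proof (cases "?q = 1")
    case True
    then show ?thesis using qn tn False by (simp add: Ef_def)
  next
    case q1: False
    have "(\<Sum>k<n. ?q ^ k) = (1 - exp t) / (1 - ?q)"
      using q1 by (simp add: sum_gp_strict qn)
    moreover have "(1 - exp t) / (1 - ?q) * ((?q - 1) / (t / of_nat n)) = of_nat n * ((exp t - 1) / t)"
      by (rule alg2) (use q1 False assms in auto)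
    ultimately show ?thesis using tn False
      by (simp add: Ef_def)
  qed
qed

lemma Ef_L: "((\<lambda>y. (exp y - 1) / y) \<longlongrightarrow> (1::complex)) (at 0)"
    using DERIV_exp[of "0::complex"] unfolding has_field_derivative_iff by (simp only: exp_zero diff_zero)

lemma Ef_X: assumes "e > 0" shows "\<exists>s>0. \<forall>x::complex. x \<noteq> 0 \<and> dist x 0 < s \<longrightarrow> dist ((exp x - 1) / x) 1 < e"
  using metric_LIM_D[OF Ef_L assms] .

lemma Ef_cont:
  assumes "e > 0"
  shows "\<exists>d>0. \<forall>x. cmod x < d \<longrightarrow> cmod (Ef x - 1) < e"
proof -
  obtain s where s: "s > 0"
    "\<forall>x::complex. x \<noteq> 0 \<and> dist x 0 < s \<longrightarrow> dist ((exp x - 1) / x) 1 < e"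
    using Ef_X[OF assms] by blast
  show ?thesis
  proof (intro exI[of _ s] conjI allI impI)
    fix x :: complex assume x: "cmod x < s"
    show "cmod (Ef x - 1) < e"
    proof (cases "x = 0")
      case True then show ?thesis using assms by (simp add: Ef_def)
    next
      case False
      then have "dist ((exp x - 1) / x) 1 < e" using s(2) x by simp
      then show ?thesis using False by (simp add: Ef_def dist_norm)
    qed
  qed (rule s)
qed



lemma prod_err:
  fixes x y G0 :: complex
  assumes "cmod (x - G0) \<le> \<tau> * cmod G0" "cmod (y - G0) \<le> \<tau> * cmod G0" "\<tau> \<le> 1" "0 \<le> \<tau>"
  shows "cmod (x * cnj y - G0 * cnj G0) \<le> 3 * \<tau> * (cmod G0)\<^sup>2"
proof -
  have eq: "x * cnj y - G0 * cnj G0 = (x - G0) * cnj y + G0 * cnj (y - G0)"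
    by (simp add: algebra_simps)
  have ny: "cmod y \<le> 2 * cmod G0"
  proof -
    have "\<tau> * cmod G0 \<le> cmod G0" using assms(3) by (simp add: mult_left_le_one_le assms(4))
    then show ?thesis using assms(2) norm_triangle_ineq2[of y G0] by linarith
  qed
  have "cmod ((x - G0) * cnj y) \<le> \<tau> * cmod G0 * (2 * cmod G0)"
    using assms(1) ny by (simp add: norm_mult mult_mono')
  moreover have "cmod (G0 * cnj (y - G0)) \<le> cmod G0 * (\<tau> * cmod G0)"
    by (simp only: norm_mult complex_mod_cnj) (rule mult_left_mono[OF assms(2) norm_ge_zero])
  ultimately have "cmod (x * cnj y - G0 * cnj G0) \<le> \<tau> * cmod G0 * (2 * cmod G0) + cmod G0 * (\<tau> * cmod G0)"
    unfolding eq by (meson add_mono norm_triangle_ineq order.trans)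
  then show ?thesis by (simp add: power2_eq_square algebra_simps)
qed

lemma split_bound:
  fixes f :: "nat \<Rightarrow> real"
  assumes "P \<le> n" "\<forall>k<n. f k \<le> (if k < P then g k else c)" "c \<ge> 0"
  shows "(\<Sum>k<n. f k) \<le> (\<Sum>k<P. g k) + real n * c"
proof -
  have "(\<Sum>k<n. f k) \<le> (\<Sum>k<n. (if k < P then g k else 0) + c)"
    using assms by (intro sum_mono) auto
  also have "\<dots> = (\<Sum>k<n. (if k < P then g k else 0)) + real n * c"
    by (simp add: sum.distrib)
  also have "(\<Sum>k<n. (if k < P then g k else 0)) = (\<Sum>k<P. g k)"
    using assms(1) by (intro sum.mono_neutral_cong_right) auto
  finally show ?thesis .
qed

lemma ratio_est:
  fixes gz gw gs :: "nat \<Rightarrow> complex" and q G0 :: complex and Q \<beta> \<tau> :: real and n P :: nat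
  assumes n: "n > 0" "P \<le> n"
    and G0: "G0 \<noteq> 0"
    and Q: "\<forall>k<n. cmod (q ^ k) \<le> Q"
    and B1: "(\<Sum>k<P. cmod (gz k) * cmod (gw k) + (cmod G0)\<^sup>2) \<le> \<beta> * (cmod G0)\<^sup>2 * n"
    and B2: "(\<Sum>k<P. (cmod (gs k))\<^sup>2 + (cmod G0)\<^sup>2) \<le> \<beta> * (cmod G0)\<^sup>2 * n"
    and T: "\<forall>k. P \<le> k \<and> k < n \<longrightarrow> cmod (gz k - G0) \<le> \<tau> * cmod G0 \<and>
              cmod (gw k - G0) \<le> \<tau> * cmod G0 \<and> cmod (gs k - G0) \<le> \<tau> * cmod G0"
    and tau: "0 \<le> \<tau>" "\<tau> \<le> 1" and kap: "\<beta> + 3 * \<tau> \<le> 1 / 2"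
  shows "cmod ((\<Sum>k<n. q ^ k * (gz k * cnj (gw k))) / (\<Sum>k<n. gs k * cnj (gs k))
              - (\<Sum>k<n. q ^ k) / of_nat n) \<le> 4 * Q * (\<beta> + 3 * \<tau>)"
proof -
  define \<gamma> where "\<gamma> = (cmod G0)\<^sup>2"
  have g0: "\<gamma> > 0" using G0 by (simp add: \<gamma>_def)
  have gc: "G0 * cnj G0 = complex_of_real \<gamma>" unfolding \<gamma>_def by (rule complex_norm_square[symmetric])
  have Q0: "Q \<ge> 0" using Q n by (metis norm_ge_zero order.trans)
  define K where "K = (\<Sum>k<n. q ^ k * (gz k * cnj (gw k)))"
  define S where "S = (\<Sum>k<n. gs k * cnj (gs k))"
  define A where "A = (\<Sum>k<n. q ^ k) / of_nat n"
  define \<kappa> where "\<kappa> = \<beta> + 3 * \<tau>"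
  have X: "cmod (K - \<gamma> * (\<Sum>k<n. q ^ k)) \<le> Q * (\<beta> * \<gamma> * n) + real n * (Q * (3 * \<tau> * \<gamma>))"
  proof -
    have "K - \<gamma> * (\<Sum>k<n. q ^ k) = (\<Sum>k<n. q ^ k * (gz k * cnj (gw k) - G0 * cnj G0))"
      unfolding K_def gc by (simp add: sum_distrib_left sum_subtractf algebra_simps)
    then have "cmod (K - \<gamma> * (\<Sum>k<n. q ^ k)) \<le> (\<Sum>k<n. cmod (q ^ k * (gz k * cnj (gw k) - G0 * cnj G0)))"
      by (simp add: norm_sum)
    also have "\<dots> \<le> (\<Sum>k<P. Q * (cmod (gz k) * cmod (gw k) + \<gamma>)) + real n * (Q * (3 * \<tau> * \<gamma>))"
    proof (rule split_bound[OF n(2)])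
      show "0 \<le> Q * (3 * \<tau> * \<gamma>)" using Q0 tau g0 by simp
      show "\<forall>k<n. cmod (q ^ k * (gz k * cnj (gw k) - G0 * cnj G0))
          \<le> (if k < P then Q * (cmod (gz k) * cmod (gw k) + \<gamma>) else Q * (3 * \<tau> * \<gamma>))"
      proof (intro allI impI)
        fix k assume k: "k < n"
        have qk: "cmod (q ^ k) \<le> Q" using Q k by auto
        show "cmod (q ^ k * (gz k * cnj (gw k) - G0 * cnj G0))
          \<le> (if k < P then Q * (cmod (gz k) * cmod (gw k) + \<gamma>) else Q * (3 * \<tau> * \<gamma>))"
        proof (cases "k < P")
          case True
          have "cmod (gz k * cnj (gw k) - G0 * cnj G0) \<le> cmod (gz k) * cmod (gw k) + \<gamma>"
            using norm_triangle_ineq4[of "gz k * cnj (gw k)" "G0 * cnj G0"]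
            by (simp add: norm_mult \<gamma>_def power2_eq_square)
          then show ?thesis using True qk by (simp add: norm_mult mult_mono')
        next
          case False
          have "cmod (gz k * cnj (gw k) - G0 * cnj G0) \<le> 3 * \<tau> * \<gamma>"
            unfolding \<gamma>_def using T False k tau by (intro prod_err) auto
          then show ?thesis using False qk by (simp add: norm_mult mult_mono')
        qed
      qed
    qed
    also have "(\<Sum>k<P. Q * (cmod (gz k) * cmod (gw k) + \<gamma>)) \<le> Q * (\<beta> * \<gamma> * n)"
      using B1 Q0 unfolding \<gamma>_def by (simp add: sum_distrib_left[symmetric] mult_left_mono)
    finally show ?thesis by simp
  qed
  have Y: "cmod (S - \<gamma> * n) \<le> \<kappa> * \<gamma> * n"
  proof -
    have "S - \<gamma> * n = (\<Sum>k<n. gs k * cnj (gs k) - G0 * cnj G0)"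
      unfolding S_def gc by (simp add: sum_subtractf)
    then have "cmod (S - \<gamma> * n) \<le> (\<Sum>k<n. cmod (gs k * cnj (gs k) - G0 * cnj G0))"
      by (simp add: norm_sum)
    also have "\<dots> \<le> (\<Sum>k<P. (cmod (gs k))\<^sup>2 + \<gamma>) + real n * (3 * \<tau> * \<gamma>)"
    proof (rule split_bound[OF n(2)])
      show "0 \<le> 3 * \<tau> * \<gamma>" using tau g0 by simp
      show "\<forall>k<n. cmod (gs k * cnj (gs k) - G0 * cnj G0)
          \<le> (if k < P then (cmod (gs k))\<^sup>2 + \<gamma> else 3 * \<tau> * \<gamma>)"
      proof (intro allI impI)
        fix k assume k: "k < n"
        show "cmod (gs k * cnj (gs k) - G0 * cnj G0) \<le> (if k < P then (cmod (gs k))\<^sup>2 + \<gamma> else 3 * \<tau> * \<gamma>)"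
        proof (cases "k < P")
          case True
          then show ?thesis
            using norm_triangle_ineq4[of "gs k * cnj (gs k)" "G0 * cnj G0"]
            by (simp add: norm_mult \<gamma>_def power2_eq_square)
        next
          case False
          then show ?thesis
            unfolding \<gamma>_def using T False k tau by (auto intro: prod_err)
        qed
      qed
    qed
    also have "\<dots> \<le> \<beta> * \<gamma> * n + real n * (3 * \<tau> * \<gamma>)"
      using B2 unfolding \<gamma>_def by simp
    finally show ?thesis by (simp add: \<kappa>_def algebra_simps)
  qed
  have Anorm: "cmod A \<le> Q"
  proof -
    have "cmod (\<Sum>k<n. q ^ k) \<le> (\<Sum>k<n. Q)"
      using Q by (intro order.trans[OF norm_sum] sum_mono) auto
    then show ?thesis using n unfolding A_def by (simp add: norm_divide field_simps)
  qed
  have KAS: "K - A * S = (K - \<gamma> * (\<Sum>k<n. q ^ k)) - A * (S - \<gamma> * n)"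
    unfolding A_def using n by (simp add: field_simps)
  have "cmod (K - A * S) \<le> Q * (\<beta> * \<gamma> * n) + real n * (Q * (3 * \<tau> * \<gamma>)) + Q * (\<kappa> * \<gamma> * n)"
  proof -
    have "cmod (A * (S - \<gamma> * n)) \<le> Q * (\<kappa> * \<gamma> * n)"
      unfolding norm_mult using Anorm Y Q0 by (intro mult_mono) auto
    then show ?thesis unfolding KAS using X norm_triangle_ineq4[of "K - \<gamma> * (\<Sum>k<n. q ^ k)" "A * (S - \<gamma> * n)"] by linarith
  qed
  also have "\<dots> = 2 * Q * \<kappa> * \<gamma> * n" by (simp add: \<kappa>_def algebra_simps)
  finally have num: "cmod (K - A * S) \<le> 2 * Q * \<kappa> * \<gamma> * n" .
  have Slow: "cmod S \<ge> \<gamma> * n / 2"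
  proof -
    have "cmod (complex_of_real (\<gamma> * n)) = \<gamma> * n" using g0 by (simp only: norm_of_real) simp
    moreover have "cmod (complex_of_real (\<gamma> * n) - S) = cmod (S - \<gamma> * n)"
      by (simp add: norm_minus_commute)
    ultimately have "cmod S \<ge> \<gamma> * n - \<kappa> * \<gamma> * n" using Y norm_triangle_ineq2[of "complex_of_real (\<gamma> * n)" S]
      by linarith
    moreover have "\<kappa> * (\<gamma> * n) \<le> (1/2) * (\<gamma> * n)" using kap g0 unfolding \<kappa>_def
      by (intro mult_right_mono) auto
    then have "\<kappa> * \<gamma> * n \<le> \<gamma> * n / 2" by (simp add: mult.assoc)
    ultimately show ?thesis by linarith
  qed
  have Spos: "\<gamma> * n / 2 > 0" using g0 n by simp
  have S0: "S \<noteq> 0" using Slow Spos by auto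
  have "cmod (K / S - A) = cmod (K - A * S) / cmod S"
    using S0 by (simp add: norm_divide[symmetric] diff_divide_distrib)
  also have "\<dots> \<le> (2 * Q * \<kappa> * \<gamma> * n) / (\<gamma> * n / 2)"
    using frac_le[OF order.trans[OF norm_ge_zero num] num Spos Slow] .
  also have "\<dots> = 4 * Q * \<kappa>" using g0 n by (simp add: field_simps)
  finally show ?thesis unfolding K_def S_def A_def \<kappa>_def .
qed



definition shift :: "nat \<Rightarrow> complex \<Rightarrow> complex" where
  "shift n a = exp (2 * complex_of_real pi * \<i> * a / of_nat n)"

lemma shift_0[simp]: "shift n 0 = 1" by (simp add: shift_def)

lemma shift_ne0[simp]: "shift n a \<noteq> 0" by (simp add: shift_def)

lemma norm_shift: "cmod (shift n a) = exp (- 2 * pi * Im a / n)"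
  unfolding shift_def norm_exp_eq_Re by (simp add: Re_divide_of_nat)

lemma shift_pow_bound:
  assumes "k \<le> n" "cmod a \<le> R"
  shows "cmod (shift n a) ^ k \<le> exp (2 * pi * R)" "(1 / cmod (shift n a)) ^ k \<le> exp (2 * pi * R)"
proof -
  have ia: "\<bar>Im a\<bar> \<le> R" using abs_Im_le_cmod[of a] assms(2) by linarith
  have kn: "real k / n \<le> 1" "0 \<le> real k / n" using assms(1)
    by (cases "n = 0") (auto simp: divide_le_eq_1)
  have b: "real k * (2 * pi * \<bar>Im a\<bar> / n) \<le> 2 * pi * R"
  proof -
    have "real k * (2 * pi * \<bar>Im a\<bar> / n) = (real k / n) * (2 * pi * \<bar>Im a\<bar>)" by simp
    also have "\<dots> \<le> 1 * (2 * pi * R)"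
      using kn ia by (intro mult_mono) auto
    finally show ?thesis by simp
  qed
  have "cmod (shift n a) ^ k = exp (real k * (- 2 * pi * Im a / n))"
    unfolding norm_shift by (rule exp_of_nat_mult[symmetric])
  also have "\<dots> \<le> exp (2 * pi * R)"
  proof -
    have h: "- 2 * pi * Im a \<le> 2 * pi * \<bar>Im a\<bar>"
    proof -
      have "(2*pi) * (- Im a) \<le> (2*pi) * \<bar>Im a\<bar>" using pi_gt_zero by (intro mult_left_mono) auto
      then show ?thesis by simp
    qed
    have "real k * (- 2 * pi * Im a / n) \<le> real k * (2 * pi * \<bar>Im a\<bar> / n)"
      by (intro mult_left_mono divide_right_mono h) auto
    then show ?thesis using b by simp
  qed
  finally show "cmod (shift n a) ^ k \<le> exp (2 * pi * R)" .
  have "(1 / cmod (shift n a)) ^ k = exp (real k * (2 * pi * Im a / n))"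
  proof -
    have "1 / exp (- 2 * pi * Im a / n) = exp (2 * pi * Im a / n)"
      by (simp add: exp_minus inverse_eq_divide)
    then show ?thesis unfolding norm_shift by (simp add: exp_of_nat_mult[symmetric])
  qed
  also have "\<dots> \<le> exp (2 * pi * R)"
  proof -
    have "real k * (2 * pi * Im a / n) \<le> real k * (2 * pi * \<bar>Im a\<bar> / n)"
      by (intro mult_left_mono divide_right_mono) auto
    then show ?thesis using b by simp
  qed
  finally show "(1 / cmod (shift n a)) ^ k \<le> exp (2 * pi * R)" .
qed

lemma inv_cnj_shift:
  assumes "cmod \<zeta> = 1"
  shows "1 / cnj (\<zeta> * shift n a) = \<zeta> * shift n (cnj a)"
proof -
  have "1 / cnj (\<zeta> * shift n a) = (1 / cnj \<zeta>) * (1 / cnj (shift n a))" by simp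
  also have "1 / cnj \<zeta> = \<zeta>" by (rule circle_inv[OF assms])
  also have "1 / cnj (shift n a) = shift n (cnj a)"
  proof -
    have "cnj (shift n a) = exp (cnj (2 * complex_of_real pi * \<i> * a / of_nat n))"
      unfolding shift_def by (rule exp_cnj)
    also have "cnj (2 * complex_of_real pi * \<i> * a / of_nat n) = - (2 * complex_of_real pi * \<i> * cnj a / of_nat n)"
      by simp
    finally have "cnj (shift n a) = exp (- (2 * complex_of_real pi * \<i> * cnj a / of_nat n))" .
    then show ?thesis unfolding shift_def by (simp add: exp_minus inverse_eq_divide)
  qed
  finally show ?thesis .
qed

lemma alg_est:
  fixes A B G0 c w :: complex and \<rho> lam e :: real
  assumes "1 - cmod c \<le> \<rho>" "\<rho> \<le> 1" "cmod c \<le> 1/2"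
    "cmod (A - G0) \<le> lam * cmod G0" "cmod A \<le> 2 * cmod G0" "cmod B \<le> 2 * cmod G0" "cmod w \<le> e"
  shows "cmod ((A - cnj c * cnj B * w) / complex_of_real \<rho> - G0) \<le> (lam + 4 * cmod c * (1 + e)) * cmod G0"
proof -
  have r0: "\<rho> \<ge> 1/2" using assms by linarith
  have eq: "(A - cnj c * cnj B * w) / complex_of_real \<rho> - G0
        = A * complex_of_real ((1 - \<rho>) / \<rho>) + (A - G0) - cnj c * cnj B * w / complex_of_real \<rho>"
    using r0 by (simp add: field_simps)
  have b1: "cmod (A * complex_of_real ((1 - \<rho>) / \<rho>)) \<le> 2 * cmod G0 * (2 * cmod c)"
  proof -
    have "(1 - \<rho>) / \<rho> \<le> cmod c / (1/2)"
      using assms r0 by (intro frac_le) auto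
    moreover have "0 \<le> (1 - \<rho>) / \<rho>" using assms r0 by auto
    ultimately have "\<bar>(1 - \<rho>) / \<rho>\<bar> \<le> 2 * cmod c" by simp
    then show ?thesis unfolding norm_mult norm_of_real using assms(5)
      by (intro mult_mono) auto
  qed
  have b2: "cmod (cnj c * cnj B * w / complex_of_real \<rho>) \<le> cmod c * (2 * cmod G0) * e * 2"
  proof -
    have "cmod (cnj c * cnj B * w / complex_of_real \<rho>) = cmod c * cmod B * cmod w * (1 / \<rho>)"
      using r0 by (simp add: norm_mult norm_divide)
    also have "\<dots> \<le> cmod c * (2 * cmod G0) * e * 2"
    proof -
      have "1 / \<rho> \<le> 2" using r0 by (simp add: field_simps)
      moreover have "0 \<le> e" using assms(7) norm_ge_zero order.trans by blast
      ultimately show ?thesis using assms(6,7) r0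
        by (intro mult_mono) auto
    qed
    finally show ?thesis .
  qed
  have tri: "cmod (A * complex_of_real ((1 - \<rho>) / \<rho>) + (A - G0) - cnj c * cnj B * w / complex_of_real \<rho>)
     \<le> cmod (A * complex_of_real ((1 - \<rho>) / \<rho>)) + cmod (A - G0) + cmod (cnj c * cnj B * w / complex_of_real \<rho>)"
    by (meson add_mono norm_triangle_ineq norm_triangle_ineq4 order.trans order.refl)
  have "cmod ((A - cnj c * cnj B * w) / complex_of_real \<rho> - G0)
     \<le> lam * cmod G0 + 2 * cmod G0 * (2 * cmod c) + cmod c * (2 * cmod G0) * e * 2"
    unfolding eq using tri b1 b2 assms(4) by linarith
  also have "\<dots> = (lam + 4 * cmod c * (1 + e)) * cmod G0" by (simp add: algebra_simps)
  finally show ?thesis .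
qed


lemma near_bound: "cmod (A - G0) \<le> lam * cmod G0 \<Longrightarrow> lam \<le> 1 \<Longrightarrow> cmod A \<le> 2 * cmod G0"
proof -
  assume h: "cmod (A - G0) \<le> lam * cmod G0" "lam \<le> 1"
  have "lam * cmod G0 \<le> 1 * cmod G0" using h(2) by (intro mult_right_mono) auto
  then show ?thesis using h(1) norm_triangle_ineq2[of A G0] by linarith
qed

lemma block_point:
  fixes \<alpha> :: "nat \<Rightarrow> complex"
  assumes zero: "\<forall>j. P \<le> j \<and> j < n \<and> j \<noteq> M \<longrightarrow> \<alpha> j = 0"
    and PM: "P \<le> M" "M < n"
    and v: "cmod (\<alpha> M) \<le> 1/2"
    and z1: "cmod \<zeta> = 1"
    and a: "cmod a \<le> R"
    and cont: "\<forall>a'. cmod a' \<le> R \<longrightarrow> cmod (gfun \<alpha> P (\<zeta> * shift n a') - gfun \<alpha> P \<zeta>) \<le> lam * cmod (gfun \<alpha> P \<zeta>)"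
    and lam: "0 \<le> lam" "lam \<le> 1"
    and k: "P \<le> k" "k < n"
  shows "cmod (gfun \<alpha> k (\<zeta> * shift n a) - gfun \<alpha> P \<zeta>)
          \<le> (lam + 4 * cmod (\<alpha> M) * (1 + exp (2 * pi * R))) * cmod (gfun \<alpha> P \<zeta>)"
proof -
  define x where "x = \<zeta> * shift n a"
  define G0 where "G0 = gfun \<alpha> P \<zeta>"
  have x0: "x \<noteq> 0" using z1 by (auto simp: x_def)
  have hA: "cmod (gfun \<alpha> P x - G0) \<le> lam * cmod G0" using cont a unfolding x_def G0_def by auto
  have nn: "0 \<le> 4 * cmod (\<alpha> M) * (1 + exp (2 * pi * R))"
    by (intro mult_nonneg_nonneg) (auto intro: add_nonneg_nonneg)
  show ?thesis
  proof (cases "k \<le> M")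
    case True
    have "gfun \<alpha> k x = gfun \<alpha> P x"
      using zero True PM k x0 by (intro gfun_const) auto
    moreover have "lam * cmod G0 \<le> (lam + 4 * cmod (\<alpha> M) * (1 + exp (2 * pi * R))) * cmod G0"
      using nn by (intro mult_right_mono) auto
    ultimately show ?thesis using hA unfolding x_def G0_def by simp
  next
    case False
    define y where "y = 1 / cnj x"
    have y0: "y \<noteq> 0" using x0 by (simp add: y_def)
    have yeq: "y = \<zeta> * shift n (cnj a)" unfolding y_def x_def by (rule inv_cnj_shift[OF z1])
    have hB: "cmod (gfun \<alpha> P y - G0) \<le> lam * cmod G0" using cont a unfolding yeq G0_def by auto
    have e1: "gfun \<alpha> k x = gfun \<alpha> (Suc M) x"
      using zero False PM k x0 by (intro gfun_const) auto
    have e2: "gfun \<alpha> M x = gfun \<alpha> P x"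
      using zero PM x0 by (intro gfun_const) auto
    have e3: "gfun \<alpha> M y = gfun \<alpha> P y"
      using zero PM y0 by (intro gfun_const) auto
    define w where "w = 1 / x ^ Suc M"
    have wb: "cmod w \<le> exp (2 * pi * R)"
    proof -
      have "cmod w = (1 / cmod (shift n a)) ^ Suc M"
        using z1 by (simp add: w_def x_def norm_divide norm_mult norm_power power_one_over)
      also have "\<dots> \<le> exp (2 * pi * R)" using shift_pow_bound(2)[of "Suc M" n a R] PM a by simp
      finally show ?thesis .
    qed
    have "gfun \<alpha> k x = (gfun \<alpha> P x - cnj (\<alpha> M) * cnj (gfun \<alpha> P y) * w) / complex_of_real (rho (\<alpha> M))"
      unfolding e1 gfun_Suc[OF x0] e2 y_def[symmetric] e3 w_def by simp
    moreover have "cmod ((gfun \<alpha> P x - cnj (\<alpha> M) * cnj (gfun \<alpha> P y) * w) / complex_of_real (rho (\<alpha> M)) - G0)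
        \<le> (lam + 4 * cmod (\<alpha> M) * (1 + exp (2 * pi * R))) * cmod G0"
    proof (rule alg_est)
      show "1 - cmod (\<alpha> M) \<le> rho (\<alpha> M)" using v by (intro rho_ge) auto
      show "rho (\<alpha> M) \<le> 1" by (rule rho_le1)
      show "cmod (gfun \<alpha> P x) \<le> 2 * cmod G0" using near_bound[OF hA lam(2)] .
      show "cmod (gfun \<alpha> P y) \<le> 2 * cmod G0" using near_bound[OF hB lam(2)] .
    qed (use v hA wb in auto)
    ultimately show ?thesis unfolding x_def G0_def by simp
  qed
qed



lemma sv_at:
  assumes "strict_mono_on {1..} N" "l \<ge> 1"
  shows "sparse_verblunsky v N (N l) = v l"
proof -
  have inj: "inj_on N {1..}" using strict_mono_on_imp_inj_on[OF assms(1)] .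
  have "(THE l'. 1 \<le> l' \<and> N l' = N l) = l"
    using assms(2) inj by (intro the_equality) (auto dest: inj_onD)
  then show ?thesis using assms(2) unfolding sparse_verblunsky_def by auto
qed

lemma sv_other: "(\<forall>l\<ge>1. N l \<noteq> k) \<Longrightarrow> sparse_verblunsky v N k = 0"
  unfolding sparse_verblunsky_def by auto

lemma sv_norm:
  assumes "strict_mono_on {1..} N" "\<forall>l\<ge>1. cmod (v l) < 1"
  shows "cmod (sparse_verblunsky v N k) < 1"
proof (cases "\<exists>l\<ge>1. N l = k")
  case True
  then obtain l where "l \<ge> 1" "N l = k" by auto
  then show ?thesis using sv_at[OF assms(1) \<open>l \<ge> 1\<close>] assms(2) by simp
qed (use sv_other in auto)

lemma sv_agree:
  assumes "strict_mono_on {1..} N" "strict_mono_on {1..} N'"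
    "\<forall>l. 1 \<le> l \<and> l \<le> L \<longrightarrow> N' l = N l" "\<forall>l>L. N l > K \<and> N' l > K" "k \<le> K"
  shows "sparse_verblunsky v N k = sparse_verblunsky v N' k"
proof (cases "\<exists>l\<ge>1. N l = k")
  case True
  then obtain l where l: "l \<ge> 1" "N l = k" by auto
  have "l \<le> L"
  proof (rule ccontr)
    assume "\<not> l \<le> L" then have "N l > K" using assms(4) by auto
    then show False using l assms(5) by simp
  qed
  then have "N' l = k" using assms(3) l by auto
  then show ?thesis using sv_at[OF assms(1) l(1)] sv_at[OF assms(2) l(1)] l by simp
next
  case False
  have "\<forall>l\<ge>1. N' l \<noteq> k"
  proof (intro allI impI notI)
    fix l assume l: "l \<ge> 1" "N' l = k"
    have "l \<le> L"
    proof (rule ccontr)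
      assume "\<not> l \<le> L" then have "N' l > K" using assms(4) by auto
      then show False using l assms(5) by simp
    qed
    then show False using assms(3) l False by auto
  qed
  then show ?thesis using False sv_other by metis
qed

definition extL :: "nat list \<Rightarrow> nat \<Rightarrow> nat" where
  "extL xs l = (if l \<le> length xs then xs ! (l - 1) else last xs + l)"

lemma sm_le: fixes N :: "nat \<Rightarrow> nat" shows "strict_mono_on {1..} N \<Longrightarrow> 1 \<le> l \<Longrightarrow> l \<le> l' \<Longrightarrow> N l \<le> N l'"
  by (metis atLeast_iff le_eq_less_or_eq order.trans strict_mono_onD)

lemma sm_ge: fixes N :: "nat \<Rightarrow> nat" shows "strict_mono_on {1..} N \<Longrightarrow> 1 \<le> l \<Longrightarrow> l - 1 \<le> N l"
proof (induction l)
  case 0 then show ?case by simp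
next
  case (Suc l)
  show ?case
  proof (cases "l = 0")
    case False
    have "N l < N (Suc l)" using Suc False by (intro strict_mono_onD[OF Suc.prems(1)]) auto
    then show ?thesis using Suc False by auto
  qed simp
qed

lemma extL_props:
  assumes "strict_mono_on {1..} N" "L \<ge> 1" "xs = map N [1..<Suc L]"
  shows "length xs = L" "last xs = N L" "\<forall>l. 1 \<le> l \<and> l \<le> L \<longrightarrow> extL xs l = N l"
    "\<forall>l>L. extL xs l > N L" "strict_mono_on {1..} (extL xs)"
proof -
  show len: "length xs = L" using assms by simp
  show la: "last xs = N L" using assms by (simp add: last_map)
  show eq: "\<forall>l. 1 \<le> l \<and> l \<le> L \<longrightarrow> extL xs l = N l"
  proof (intro allI impI)
    fix l assume l: "1 \<le> l \<and> l \<le> L"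
    have l1: "l - 1 < length [1..<Suc L]" using l by (simp del: upt_Suc) arith
    have "[1..<Suc L] ! (l - 1) = 1 + (l - 1)" by (rule nth_upt) (use l in arith)
    then have "xs ! (l - 1) = N l" using assms(3) nth_map[OF l1, of N] l by simp
    then show "extL xs l = N l" using l len by (simp add: extL_def)
  qed
  show gt: "\<forall>l>L. extL xs l > N L" using len la by (auto simp: extL_def)
  show "strict_mono_on {1..} (extL xs)"
  proof (rule strict_mono_onI)
    fix r s :: nat assume rs: "r \<in> {1..}" "s \<in> {1..}" "r < s"
    show "extL xs r < extL xs s"
    proof (cases "s \<le> L")
      case True
      then show ?thesis using eq rs strict_mono_onD[OF assms(1)] by auto
    next
      case False
      then have s: "extL xs s = N L + s" using len la by (simp add: extL_def)
      show ?thesis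
      proof (cases "r \<le> L")
        case True
        then have "extL xs r = N r" using eq rs by auto
        moreover have "N r \<le> N L" using sm_le[OF assms(1)] rs True by auto
        ultimately show ?thesis using s rs by simp
      next
        case False
        then show ?thesis using s rs len la by (simp add: extL_def)
      qed
    qed
  qed
qed

definition Good :: "(nat \<Rightarrow> complex) \<Rightarrow> nat list \<Rightarrow> nat \<Rightarrow> bool" where
  "Good v xs n \<longleftrightarrow>
    (let L = length xs; P = Suc (last xs); \<alpha> = sparse_verblunsky v (extL xs);
         U = upb \<alpha> (exp (2 * pi * L)) P; c = lowb \<alpha> P in
     real P * (1 + U\<^sup>2 / c\<^sup>2) * (L + 1) \<le> real n \<and>
     (\<forall>\<theta> a. cmod a \<le> L \<longrightarrow>
        cmod (gfun \<alpha> P (exp (\<i> * complex_of_real \<theta>) * shift n a) - gfun \<alpha> P (exp (\<i> * complex_of_real \<theta>)))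
          \<le> c / (L + 1)))"

lemma gfun_cont: "continuous_on {z. 1/2 \<le> cmod z \<and> cmod z \<le> 2} (gfun \<alpha> k)"
  unfolding gfun_def by (intro continuous_intros) auto

lemma annulus_compact: "compact {z::complex. 1/2 \<le> cmod z \<and> cmod z \<le> 2}"
proof -
  have "{z::complex. 1/2 \<le> cmod z \<and> cmod z \<le> 2} = cball 0 2 \<inter> - ball 0 (1/2)"
    by (auto simp: dist_norm)
  moreover have "compact (cball (0::complex) 2 \<inter> - ball 0 (1/2))"
    by (intro compact_Int_closed compact_cball closed_Compl open_ball)
  ultimately show ?thesis by simp
qed

lemma shift_close:
  assumes "d > 0"
  shows "\<exists>T. \<forall>n\<ge>T. \<forall>a. cmod a \<le> R \<longrightarrow> cmod (shift n a - 1) < d"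
proof -
  have "isCont exp (0::complex)" by (rule isCont_exp)
  then obtain d' where d': "d' > 0" "\<forall>y::complex. dist y 0 < d' \<longrightarrow> dist (exp y) (exp 0) < d"
    using assms unfolding continuous_at_eps_delta by blast
  obtain T :: nat where T: "T > 2 * pi * \<bar>R\<bar> / d'" using reals_Archimedean2 by blast
  have "2 * pi * \<bar>R\<bar> / d' \<ge> 0" using d' by simp
  then have "real T > 0" using T by linarith
  then have Tp: "T > 0" by simp
  show ?thesis
  proof (intro exI[of _ T] allI impI)
    fix n a assume n: "n \<ge> T" and a: "cmod a \<le> R"
    have np: "real n > 0" using n Tp by simp
    have "cmod (2 * complex_of_real pi * \<i> * a / of_nat n) = 2 * pi * cmod a / n"
      by (simp add: norm_mult norm_divide)
    also have "\<dots> \<le> 2 * pi * \<bar>R\<bar> / n" using a np by (intro divide_right_mono mult_left_mono) auto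
    also have "\<dots> \<le> 2 * pi * \<bar>R\<bar> / T" using n Tp by (intro divide_left_mono) auto
    also have "\<dots> < d'" using T Tp d' by (simp add: field_simps)
    finally have "dist (2 * complex_of_real pi * \<i> * a / of_nat n) 0 < d'" by simp
    then show "cmod (shift n a - 1) < d" using d' unfolding shift_def by (simp add: dist_norm)
  qed
qed

lemma Good_ex:
  assumes "lowb (sparse_verblunsky v (extL xs)) (Suc (last xs)) > 0"
  shows "\<exists>T. \<forall>n\<ge>T. Good v xs n"
proof -
  define L where "L = length xs"
  define P where "P = Suc (last xs)"
  define \<alpha> where "\<alpha> = sparse_verblunsky v (extL xs)"
  define U where "U = upb \<alpha> (exp (2 * pi * L)) P"
  define c where "c = lowb \<alpha> P"
  define G where "G = gfun \<alpha> P"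
  define K where "K = {z::complex. 1/2 \<le> cmod z \<and> cmod z \<le> 2}"
  have c0: "c > 0" using assms by (simp add: c_def \<alpha>_def P_def)
  have uc: "uniformly_continuous_on K G"
    unfolding K_def G_def by (intro compact_uniformly_continuous gfun_cont annulus_compact)
  have e0: "c / (real L + 1) > 0" using c0 by simp
  obtain d where d: "d > 0" "\<forall>x\<in>K. \<forall>x'\<in>K. dist x' x < d \<longrightarrow> dist (G x') (G x) < c / (real L + 1)"
    using uc e0 unfolding uniformly_continuous_on_def by metis
  obtain T1 where T1: "\<forall>n\<ge>T1. \<forall>a. cmod a \<le> L \<longrightarrow> cmod (shift n a - 1) < min d (1/2)"
    using shift_close[of "min d (1/2)" L] d by auto
  obtain T2 :: nat where T2: "real T2 \<ge> real P * (1 + U\<^sup>2 / c\<^sup>2) * (real L + 1)"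
    using real_nat_ceiling_ge by blast
  show ?thesis
  proof (intro exI[of _ "max T1 T2"] allI impI)
    fix n assume n: "n \<ge> max T1 T2"
    have p1: "real P * (1 + U\<^sup>2 / c\<^sup>2) * (real L + 1) \<le> real n" using T2 n by linarith
    have p2: "\<forall>\<theta> a. cmod a \<le> L \<longrightarrow>
        cmod (G (exp (\<i> * complex_of_real \<theta>) * shift n a) - G (exp (\<i> * complex_of_real \<theta>))) \<le> c / (real L + 1)"
    proof (intro allI impI)
      fix \<theta> :: real and a :: complex assume a: "cmod a \<le> L"
      define \<zeta> where "\<zeta> = exp (\<i> * complex_of_real \<theta>)"
      have z1: "cmod \<zeta> = 1" by (simp add: \<zeta>_def)
      have s1: "cmod (shift n a - 1) < min d (1/2)" using T1 n a by auto
      have "cmod (shift n a) \<ge> 1/2" using s1 norm_triangle_ineq2[of 1 "shift n a"]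
        by (simp add: norm_minus_commute)
      moreover have "cmod (shift n a) \<le> 2" using s1 norm_triangle_ineq2[of "shift n a" 1] by simp
      ultimately have inK: "\<zeta> * shift n a \<in> K" using z1 by (simp add: K_def norm_mult)
      have zK: "\<zeta> \<in> K" using z1 by (simp add: K_def)
      have "\<zeta> * shift n a - \<zeta> = \<zeta> * (shift n a - 1)" by (simp add: algebra_simps)
      then have "dist (\<zeta> * shift n a) \<zeta> = cmod (shift n a - 1)"
        using z1 by (simp add: dist_norm norm_mult)
      then have "dist (\<zeta> * shift n a) \<zeta> < d" using s1 by simp
      then have "dist (G (\<zeta> * shift n a)) (G \<zeta>) < c / (real L + 1)" using d(2) inK zK by blast
      then show "cmod (G (\<zeta> * shift n a) - G \<zeta>) \<le> c / (real L + 1)" unfolding \<zeta>_def by (simp add: dist_norm)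
    qed
    show "Good v xs n" unfolding Good_def Let_def L_def[symmetric] P_def[symmetric] \<alpha>_def[symmetric]
      U_def[symmetric] c_def[symmetric] G_def[symmetric]
      using p1 p2 by blast
  qed
qed



lemma shift_mult_cnj: "shift n a * cnj (shift n b) = shift n (a - cnj b)"
proof -
  have "shift n a * cnj (shift n b) = exp (2 * complex_of_real pi * \<i> * a / of_nat n + cnj (2 * complex_of_real pi * \<i> * b / of_nat n))"
    unfolding shift_def exp_add exp_cnj[symmetric] ..
  also have "2 * complex_of_real pi * \<i> * a / of_nat n + cnj (2 * complex_of_real pi * \<i> * b / of_nat n)
      = 2 * complex_of_real pi * \<i> * (a - cnj b) / of_nat n"
    by (simp add: diff_divide_distrib right_diff_distrib)
  finally show ?thesis unfolding shift_def .
qed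

lemma stmt_point: "exp (\<i> * (complex_of_real \<theta> + complex_of_real (2 * pi) * a / of_nat n))
   = exp (\<i> * complex_of_real \<theta>) * shift n a"
proof -
  have "\<i> * (complex_of_real \<theta> + complex_of_real (2 * pi) * a / of_nat n)
     = \<i> * complex_of_real \<theta> + 2 * complex_of_real pi * \<i> * a / of_nat n"
    by (simp add: algebra_simps)
  then show ?thesis unfolding shift_def by (simp add: exp_add)
qed

lemma lowb_cong: "(\<forall>j<k. \<alpha> j = \<beta> j) \<Longrightarrow> lowb \<alpha> k = lowb \<beta> k"
  unfolding lowb_def by (intro prod.cong) auto

lemma upb_cong: "(\<forall>j<k. \<alpha> j = \<beta> j) \<Longrightarrow> upb \<alpha> E k = upb \<beta> E k"
  unfolding upb_def by (intro prod.cong) auto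


lemma block_est:
  fixes v :: "nat \<Rightarrow> complex" and N :: "nat \<Rightarrow> nat"
  assumes sm: "strict_mono_on {1..} N"
    and vn: "\<forall>l\<ge>1. cmod (v l) < 1"
    and j: "j \<ge> 2" "N j < n" "n \<le> N (Suc j)"
    and good: "Good v (map N [1..<j]) n"
    and R: "R \<ge> 0" "R \<le> real (j - 1)"
    and ab: "cmod a \<le> R" "cmod b \<le> R"
    and vj: "cmod (v j) \<le> 1/2"
    and kap: "1 / real j + 3 * (1 / real j + 4 * cmod (v j) * (1 + exp (2 * pi * R))) \<le> 1/2"
  shows "cmod (CD_kernel (sparse_verblunsky v N) n (exp (\<i> * complex_of_real \<theta>) * shift n a)
                 (exp (\<i> * complex_of_real \<theta>) * shift n b)
            / CD_kernel (sparse_verblunsky v N) n (exp (\<i> * complex_of_real \<theta>)) (exp (\<i> * complex_of_real \<theta>))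
            - (\<Sum>k<n. shift n (a - cnj b) ^ k) / of_nat n)
         \<le> 4 * exp (2 * pi * (2 * R)) * (1 / real j + 3 * (1 / real j + 4 * cmod (v j) * (1 + exp (2 * pi * R))))"
proof -
  define L where "L = j - 1"
  have L1: "L \<ge> 1" "Suc L = j" using j by (auto simp: L_def)
  define xs where "xs = map N [1..<Suc L]"
  have xsj: "xs = map N [1..<j]" using L1 by (simp add: xs_def)
  note ep = extL_props[OF sm L1(1) xs_def]
  define P where "P = Suc (N L)"
  define M where "M = N j"
  define \<alpha> where "\<alpha> = sparse_verblunsky v N"
  define \<alpha>' where "\<alpha>' = sparse_verblunsky v (extL xs)"
  define \<zeta> where "\<zeta> = exp (\<i> * complex_of_real \<theta>)"
  define E where "E = exp (2 * pi * real L)"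
  define W where "W = 1 + exp (2 * pi * R)"
  define lam where "lam = 1 / real j"
  define \<tau> where "\<tau> = lam + 4 * cmod (v j) * W"
  have z1: "cmod \<zeta> = 1" by (simp add: \<zeta>_def)
  have z0: "\<zeta> \<noteq> 0" using z1 by auto
  have NLj: "N L < N j" using L1 sm by (intro strict_mono_onD[OF sm]) auto
  have PM: "P \<le> M" "M < n" using NLj j by (auto simp: P_def M_def)
  have agree: "\<forall>k<P. \<alpha> k = \<alpha>' k"
  proof (intro allI impI)
    fix k assume "k < P"
    then have kle: "k \<le> N L" by (simp add: P_def)
    have "\<forall>l>L. N L < N l \<and> N L < extL xs l"
      using ep(4) sm L1 by (auto intro: strict_mono_onD[OF sm])
    then show "\<alpha> k = \<alpha>' k" unfolding \<alpha>_def \<alpha>'_def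
      by (intro sv_agree[OF sm ep(5) ep(3) _ kle]) auto
  qed
  have an: "\<forall>k. cmod (\<alpha> k) < 1" unfolding \<alpha>_def using sv_norm[OF sm vn] by auto
  have Gcong: "gfun \<alpha> P = gfun \<alpha>' P" by (rule gfun_cong[OF agree])
  have lcong: "lowb \<alpha> P = lowb \<alpha>' P" by (rule lowb_cong[OF agree])
  have ucong: "upb \<alpha> E P = upb \<alpha>' E P" by (rule upb_cong[OF agree])
  define c where "c = lowb \<alpha> P"
  define U where "U = upb \<alpha> E P"
  have c0: "c > 0" unfolding c_def using an by (intro lowb_pos) auto
  have good0: "real P * (1 + (upb \<alpha>' E P)\<^sup>2 / (lowb \<alpha>' P)\<^sup>2) * (real L + 1) \<le> real n \<and>
     (\<forall>\<theta> a. cmod a \<le> real L \<longrightarrow>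
        cmod (gfun \<alpha>' P (exp (\<i> * complex_of_real \<theta>) * shift n a) - gfun \<alpha>' P (exp (\<i> * complex_of_real \<theta>)))
          \<le> lowb \<alpha>' P / (real L + 1))"
    using good unfolding Good_def Let_def xsj[symmetric] ep(1) ep(2)
    unfolding P_def[symmetric] \<alpha>'_def[symmetric] E_def[symmetric] .
  have good': "real P * (1 + U\<^sup>2 / c\<^sup>2) * (real L + 1) \<le> real n \<and>
     (\<forall>\<theta> a. cmod a \<le> real L \<longrightarrow>
        cmod (gfun \<alpha> P (exp (\<i> * complex_of_real \<theta>) * shift n a) - gfun \<alpha> P (exp (\<i> * complex_of_real \<theta>)))
          \<le> c / (real L + 1))"
    unfolding Gcong lcong ucong c_def U_def using good0 .
  define G0 where "G0 = gfun \<alpha> P \<zeta>"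
  have cG: "c \<le> cmod G0" unfolding c_def G0_def using an z1 by (intro gfun_lower) auto
  have G00: "G0 \<noteq> 0" using cG c0 by auto
  have Lj: "real L + 1 = real j" using L1 by auto
  have lam: "0 \<le> lam" "lam \<le> 1" using j by (auto simp: lam_def)
  have cont: "\<forall>a'. cmod a' \<le> R \<longrightarrow> cmod (gfun \<alpha> P (\<zeta> * shift n a') - gfun \<alpha> P \<zeta>) \<le> lam * cmod (gfun \<alpha> P \<zeta>)"
  proof (intro allI impI)
    fix a' :: complex assume a': "cmod a' \<le> R"
    then have "cmod a' \<le> real L" using R L1 by (simp add: L_def)
    then have "cmod (gfun \<alpha> P (\<zeta> * shift n a') - gfun \<alpha> P \<zeta>) \<le> c / (real L + 1)"
      using good' unfolding \<zeta>_def by blast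
    also have "\<dots> \<le> cmod G0 / (real L + 1)" using cG by (intro divide_right_mono) auto
    finally show "cmod (gfun \<alpha> P (\<zeta> * shift n a') - gfun \<alpha> P \<zeta>) \<le> lam * cmod (gfun \<alpha> P \<zeta>)"
      unfolding lam_def G0_def Lj by simp
  qed
  have zero: "\<forall>j'. P \<le> j' \<and> j' < n \<and> j' \<noteq> M \<longrightarrow> \<alpha> j' = 0"
  proof (intro allI impI)
    fix j' assume h: "P \<le> j' \<and> j' < n \<and> j' \<noteq> M"
    have "\<forall>l\<ge>1. N l \<noteq> j'"
    proof (intro allI impI notI)
      fix l assume l: "l \<ge> 1" "N l = j'"
      show False
      proof (cases "l \<le> L")
        case True
        then have "N l \<le> N L" using sm_le[OF sm l(1)] by auto
        then show False using h l by (simp add: P_def)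
      next
        case False
        show False
        proof (cases "l = j")
          case True then show False using h l by (simp add: M_def)
        next
          case False
          then have "l \<ge> Suc j" using \<open>\<not> l \<le> L\<close> L1 by auto
          then have "N (Suc j) \<le> N l" using sm_le[OF sm] by auto
          then show False using h l j by simp
        qed
      qed
    qed
    then show "\<alpha> j' = 0" unfolding \<alpha>_def by (rule sv_other)
  qed
  have aM: "\<alpha> M = v j" unfolding \<alpha>_def M_def using sv_at[OF sm] j by auto
  have vM: "cmod (\<alpha> M) \<le> 1/2" using aM vj by simp
  have BP: "\<And>x. cmod x \<le> R \<Longrightarrow> \<forall>k. P \<le> k \<and> k < n \<longrightarrow> cmod (gfun \<alpha> k (\<zeta> * shift n x) - G0) \<le> \<tau> * cmod G0"
  proof (intro allI impI)
    fix x :: complex and k assume x: "cmod x \<le> R" and k: "P \<le> k \<and> k < n"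
    show "cmod (gfun \<alpha> k (\<zeta> * shift n x) - G0) \<le> \<tau> * cmod G0"
      using block_point[OF zero PM vM z1 x cont lam, of k] k aM
      unfolding G0_def \<tau>_def W_def by simp
  qed
  have tau: "0 \<le> \<tau>" "\<tau> \<le> 1" "lam + 3 * \<tau> \<le> 1/2"
  proof -
    have X0: "0 \<le> 4 * cmod (v j) * W" unfolding W_def by (intro mult_nonneg_nonneg) (auto intro: add_nonneg_nonneg)
    have k3: "lam + 3 * \<tau> \<le> 1/2" using kap unfolding \<tau>_def lam_def W_def .
    obtain X where X: "X = 4 * cmod (v j) * W" by simp
    have tX: "\<tau> = lam + X" unfolding \<tau>_def X ..
    show "0 \<le> \<tau>" using X0 lam unfolding tX X by linarith
    have "lam + 3 * (lam + X) = 4 * lam + 3 * X" by (simp add: algebra_simps)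
    then show "\<tau> \<le> 1" using k3 lam X0 unfolding tX X[symmetric] by linarith
    show "lam + 3 * \<tau> \<le> 1/2" by (rule k3)
  qed
  have E1: "E \<ge> 1" unfolding E_def by simp
  have gup: "\<And>x k. cmod x \<le> R \<Longrightarrow> k < P \<Longrightarrow> cmod (gfun \<alpha> k (\<zeta> * shift n x)) \<le> U"
  proof -
    fix x :: complex and k assume x: "cmod x \<le> R" and k: "k < P"
    have kn: "k \<le> n" using k PM by simp
    have xL: "cmod x \<le> real L" using x R by (simp add: L_def)
    have "cmod (gfun \<alpha> k (\<zeta> * shift n x)) \<le> upb \<alpha> E k"
    proof (rule gfun_upper)
      show "\<forall>j<k. cmod (\<alpha> j) < 1" using an by auto
      show "E \<ge> 1" by (rule E1)
      show "\<zeta> * shift n x \<noteq> 0" using z0 by simp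
      show "cmod (\<zeta> * shift n x) ^ k \<le> E"
        using shift_pow_bound(1)[OF kn xL] z1 by (simp add: norm_mult E_def)
      show "(1 / cmod (\<zeta> * shift n x)) ^ k \<le> E"
        using shift_pow_bound(2)[OF kn xL] z1 by (simp add: norm_mult E_def)
    qed
    also have "\<dots> \<le> U" unfolding U_def using an k E1 by (intro upb_mono) auto
    finally show "cmod (gfun \<alpha> k (\<zeta> * shift n x)) \<le> U" .
  qed
  have U0: "U \<ge> 0" using gup[of 0 0] R PM by (simp add: P_def)
  have termb: "\<And>x y k. cmod x \<le> R \<Longrightarrow> cmod y \<le> R \<Longrightarrow> k < P \<Longrightarrow>
      cmod (gfun \<alpha> k (\<zeta> * shift n x)) * cmod (gfun \<alpha> k (\<zeta> * shift n y)) + (cmod G0)\<^sup>2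
        \<le> (1 + U\<^sup>2 / c\<^sup>2) * (cmod G0)\<^sup>2"
  proof -
    fix x y :: complex and k assume x: "cmod x \<le> R" and y: "cmod y \<le> R" and k: "k < P"
    have "cmod (gfun \<alpha> k (\<zeta> * shift n x)) * cmod (gfun \<alpha> k (\<zeta> * shift n y)) \<le> U * U"
      using gup[OF x k] gup[OF y k] using U0 by (intro mult_mono) auto
    also have "U * U = U\<^sup>2 / c\<^sup>2 * c\<^sup>2" using c0 by (simp add: power2_eq_square)
    also have "\<dots> \<le> U\<^sup>2 / c\<^sup>2 * (cmod G0)\<^sup>2"
      using cG c0 by (intro mult_left_mono power_mono) auto
    finally show "cmod (gfun \<alpha> k (\<zeta> * shift n x)) * cmod (gfun \<alpha> k (\<zeta> * shift n y)) + (cmod G0)\<^sup>2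
        \<le> (1 + U\<^sup>2 / c\<^sup>2) * (cmod G0)\<^sup>2" by (simp add: algebra_simps)
  qed
  have sumb: "\<And>x y. cmod x \<le> R \<Longrightarrow> cmod y \<le> R \<Longrightarrow>
      (\<Sum>k<P. cmod (gfun \<alpha> k (\<zeta> * shift n x)) * cmod (gfun \<alpha> k (\<zeta> * shift n y)) + (cmod G0)\<^sup>2)
        \<le> lam * (cmod G0)\<^sup>2 * n"
  proof -
    fix x y :: complex assume x: "cmod x \<le> R" and y: "cmod y \<le> R"
    have "(\<Sum>k<P. cmod (gfun \<alpha> k (\<zeta> * shift n x)) * cmod (gfun \<alpha> k (\<zeta> * shift n y)) + (cmod G0)\<^sup>2)
        \<le> (\<Sum>k<P. (1 + U\<^sup>2 / c\<^sup>2) * (cmod G0)\<^sup>2)"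
      using termb[OF x y] by (intro sum_mono) auto
    also have "\<dots> = real P * (1 + U\<^sup>2 / c\<^sup>2) * (cmod G0)\<^sup>2" by simp
    also have "\<dots> \<le> (real n / (real L + 1)) * (cmod G0)\<^sup>2"
    proof -
      have "real P * (1 + U\<^sup>2 / c\<^sup>2) \<le> real n / (real L + 1)"
        using good' by (simp add: le_divide_eq)
      then show ?thesis by (intro mult_right_mono) auto
    qed
    also have "\<dots> = lam * (cmod G0)\<^sup>2 * n" unfolding lam_def Lj by simp
    finally show "(\<Sum>k<P. cmod (gfun \<alpha> k (\<zeta> * shift n x)) * cmod (gfun \<alpha> k (\<zeta> * shift n y)) + (cmod G0)\<^sup>2)
        \<le> lam * (cmod G0)\<^sup>2 * n" .
  qed
  have R0: "cmod (0::complex) \<le> R" using R by simp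
  have B2: "(\<Sum>k<P. (cmod (gfun \<alpha> k \<zeta>))\<^sup>2 + (cmod G0)\<^sup>2) \<le> lam * (cmod G0)\<^sup>2 * n"
    using sumb[OF R0 R0] by (simp add: power2_eq_square)
  have Qb: "\<forall>k<n. cmod (shift n (a - cnj b) ^ k) \<le> exp (2 * pi * (2 * R))"
  proof (intro allI impI)
    fix k assume "k < n"
    moreover have "cmod (a - cnj b) \<le> 2 * R"
      using ab norm_triangle_ineq4[of a "cnj b"] by simp
    ultimately show "cmod (shift n (a - cnj b) ^ k) \<le> exp (2 * pi * (2 * R))"
      using shift_pow_bound(1)[of k n "a - cnj b" "2 * R"] by (simp add: norm_power)
  qed
  have T: "\<forall>k. P \<le> k \<and> k < n \<longrightarrow> cmod (gfun \<alpha> k (\<zeta> * shift n a) - G0) \<le> \<tau> * cmod G0 \<and>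
              cmod (gfun \<alpha> k (\<zeta> * shift n b) - G0) \<le> \<tau> * cmod G0 \<and> cmod (gfun \<alpha> k \<zeta> - G0) \<le> \<tau> * cmod G0"
    using BP[OF ab(1)] BP[OF ab(2)] BP[OF R0] by simp
  have n0: "n > 0" using j by simp
  have Pn: "P \<le> n" using PM by simp
  have main: "cmod ((\<Sum>k<n. shift n (a - cnj b) ^ k * (gfun \<alpha> k (\<zeta> * shift n a) * cnj (gfun \<alpha> k (\<zeta> * shift n b))))
        / (\<Sum>k<n. gfun \<alpha> k \<zeta> * cnj (gfun \<alpha> k \<zeta>)) - (\<Sum>k<n. shift n (a - cnj b) ^ k) / of_nat n)
      \<le> 4 * exp (2 * pi * (2 * R)) * (lam + 3 * \<tau>)"
    by (rule ratio_est[OF n0 Pn G00 Qb sumb[OF ab] B2 T tau(1,2,3)])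
  have K1: "CD_kernel \<alpha> n (\<zeta> * shift n a) (\<zeta> * shift n b)
      = (\<Sum>k<n. shift n (a - cnj b) ^ k * (gfun \<alpha> k (\<zeta> * shift n a) * cnj (gfun \<alpha> k (\<zeta> * shift n b))))"
  proof -
    have "\<zeta> * shift n a * cnj (\<zeta> * shift n b) = (\<zeta> * cnj \<zeta>) * (shift n a * cnj (shift n b))"
      by (simp add: algebra_simps)
    also have "\<zeta> * cnj \<zeta> = 1" using z1 by (simp add: complex_norm_square[symmetric])
    finally have "\<zeta> * shift n a * cnj (\<zeta> * shift n b) = shift n (a - cnj b)" by (simp add: shift_mult_cnj)
    then show ?thesis using CD_kernel_g[of "\<zeta> * shift n a" "\<zeta> * shift n b" \<alpha> n] z0 by simp
  qed
  have K2: "CD_kernel \<alpha> n \<zeta> \<zeta> = (\<Sum>k<n. gfun \<alpha> k \<zeta> * cnj (gfun \<alpha> k \<zeta>))"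
  proof -
    have "\<zeta> * cnj \<zeta> = 1" using z1 by (simp add: complex_norm_square[symmetric])
    then show ?thesis using CD_kernel_g[of \<zeta> \<zeta> \<alpha> n] z0 by simp
  qed
  show ?thesis using main unfolding K1[symmetric] K2[symmetric]
    unfolding \<alpha>_def \<zeta>_def \<tau>_def lam_def W_def .
qed



lemma good_block:
  fixes v :: "nat \<Rightarrow> complex" and N :: "nat \<Rightarrow> nat"
  assumes sm: "strict_mono_on {1..} N" and vn: "\<forall>l\<ge>1. cmod (v l) < 1"
    and hat: "\<forall>l\<ge>1. N (Suc l) > (SOME T. \<forall>n\<ge>T. Good v (map N [1..<Suc l]) n)"
    and j: "j \<ge> 2" "n > N j"
  shows "Good v (map N [1..<j]) n"
proof -
  define L where "L = j - 1"
  have L1: "L \<ge> 1" "Suc L = j" using j by (auto simp: L_def)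
  define xs where "xs = map N [1..<Suc L]"
  note ep = extL_props[OF sm L1(1) xs_def]
  have "lowb (sparse_verblunsky v (extL xs)) (Suc (last xs)) > 0"
    using sv_norm[OF ep(5) vn] by (intro lowb_pos) auto
  then have ex: "\<exists>T. \<forall>n\<ge>T. Good v xs n" by (rule Good_ex)
  have "\<forall>n\<ge>(SOME T. \<forall>n\<ge>T. Good v xs n). Good v xs n" by (rule someI_ex[OF ex])
  moreover have "N j > (SOME T. \<forall>n\<ge>T. Good v xs n)" using hat L1 unfolding xs_def by auto
  ultimately have "Good v xs n" using j by auto
  then show ?thesis using L1 by (simp add: xs_def)
qed

lemma block_exists:
  fixes N :: "nat \<Rightarrow> nat"
  assumes sm: "strict_mono_on {1..} N" and j0: "j0 \<ge> 1" "N j0 < n"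
  shows "\<exists>j\<ge>j0. N j < n \<and> n \<le> N (Suc j)"
proof -
  define J where "J = {l. 1 \<le> l \<and> N l < n}"
  have "J \<subseteq> {..n}"
  proof
    fix l assume "l \<in> J"
    then have "1 \<le> l" "N l < n" by (auto simp: J_def)
    then show "l \<in> {..n}" using sm_ge[OF sm, of l] by auto
  qed
  then have fin: "finite J" by (rule finite_subset) simp
  have j0J: "j0 \<in> J" using j0 by (simp add: J_def)
  define j where "j = Max J"
  have jJ: "j \<in> J" unfolding j_def using fin j0J by (intro Max_in) auto
  have jge: "j \<ge> j0" unfolding j_def using fin j0J by simp
  have "Suc j \<notin> J" using fin jJ unfolding j_def by (metis Max_ge Suc_n_not_le_n)
  then have "n \<le> N (Suc j)" using jJ by (auto simp: J_def)
  then show ?thesis using jJ jge by (auto simp: J_def)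
qed

theorem mainTheorem5:
  fixes v :: "nat \<Rightarrow> complex"
  assumes "\<forall>l\<ge>1. cmod (v l) < 1"
    and "v \<longlonglongrightarrow> 0"
  shows "\<exists>Nhat :: nat list \<Rightarrow> nat. \<forall>N :: nat \<Rightarrow> nat.
    (strict_mono_on {1..} N \<and> (\<forall>l\<ge>1. N (Suc l) > Nhat (map N [1..<Suc l]))) \<longrightarrow>
    (\<forall>C :: complex set. compact C \<and> C \<subseteq> {w. \<bar>Im w\<bar> < 1/2} \<longrightarrow>
      uniform_limit ({0..<2*pi} \<times> C \<times> C)
        (\<lambda>n (\<theta>, a, b).
           CD_kernel (sparse_verblunsky v N) n
              (exp (\<i> * (complex_of_real \<theta> + 2 * pi * a / of_nat n)))
              (exp (\<i> * (complex_of_real \<theta> + 2 * pi * b / of_nat n)))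
           / CD_kernel (sparse_verblunsky v N) n
              (exp (\<i> * complex_of_real \<theta>)) (exp (\<i> * complex_of_real \<theta>)))
        (\<lambda>(\<theta>, a, b). sine_kernel (a - cnj b))
        sequentially)"
proof -
  define Nhat where "Nhat = (\<lambda>xs. SOME T. \<forall>n\<ge>T. Good v xs n)"
  show ?thesis
  proof (intro exI[of _ Nhat] allI impI)
    fix N :: "nat \<Rightarrow> nat" and C :: "complex set"
    assume hN: "strict_mono_on {1..} N \<and> (\<forall>l\<ge>1. N (Suc l) > Nhat (map N [1..<Suc l]))"
      and hC: "compact C \<and> C \<subseteq> {w. \<bar>Im w\<bar> < 1/2}"
    have sm: "strict_mono_on {1..} N" using hN by blast
    have hat: "\<forall>l\<ge>1. N (Suc l) > (SOME T. \<forall>n\<ge>T. Good v (map N [1..<Suc l]) n)"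
      using hN unfolding Nhat_def by blast
    have gb: "\<And>j n. j \<ge> 2 \<Longrightarrow> n > N j \<Longrightarrow> Good v (map N [1..<j]) n"
      using good_block[OF sm assms(1) hat] by blast
    obtain R0 where R0: "\<forall>x\<in>C. cmod x \<le> R0"
      using compact_imp_bounded[of C] hC unfolding bounded_iff by blast
    define R where "R = max R0 0"
    have R: "R \<ge> 0" "\<forall>x\<in>C. cmod x \<le> R" using R0 by (auto simp: R_def)
    show "uniform_limit ({0..<2*pi} \<times> C \<times> C)
        (\<lambda>n (\<theta>, a, b).
           CD_kernel (sparse_verblunsky v N) n
              (exp (\<i> * (complex_of_real \<theta> + 2 * pi * a / of_nat n)))
              (exp (\<i> * (complex_of_real \<theta> + 2 * pi * b / of_nat n)))
           / CD_kernel (sparse_verblunsky v N) n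
              (exp (\<i> * complex_of_real \<theta>)) (exp (\<i> * complex_of_real \<theta>)))
        (\<lambda>(\<theta>, a, b). sine_kernel (a - cnj b))
        sequentially"
      unfolding uniform_limit_iff
    proof (intro allI impI)
      fix e :: real assume e: "e > 0"
      define Q where "Q = exp (2 * pi * (2 * R))"
      define W where "W = 1 + exp (2 * pi * R)"
      have Q1: "Q \<ge> 1" using R by (simp add: Q_def)
      have W1: "W \<ge> 1" by (simp add: W_def)
      define \<delta> where "\<delta> = min (1/2) (min (1 / (48 * W)) (e / (192 * Q * W)))"
      have \<delta>0: "\<delta> > 0" using e Q1 W1 by (simp add: \<delta>_def)
      obtain j2 where j2: "\<forall>j\<ge>j2. cmod (v j - 0) < \<delta>" using LIMSEQ_D[OF assms(2) \<delta>0] by blast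
      obtain j1 :: nat where j1: "real j1 > max (max 16 (64 * Q / e)) (R + 2)"
        using reals_Archimedean2 by blast
      define j0 where "j0 = max j1 j2"
      have "j1 > 16" using j1 by simp
      then have j0ge: "j0 \<ge> 2" unfolding j0_def by linarith
      obtain d where d: "d > 0" "\<forall>x. cmod x < d \<longrightarrow> cmod (Ef x - 1) < e / (2 * Q)"
        using Ef_cont[of "e / (2 * Q)"] e Q1 by auto
      obtain n1 :: nat where n1: "real n1 > 4 * pi * R / d" using reals_Archimedean2 by blast
      show "\<forall>\<^sub>F n in sequentially. \<forall>x\<in>{0..<2*pi} \<times> C \<times> C.
          dist ((\<lambda>(\<theta>, a, b).
           CD_kernel (sparse_verblunsky v N) n
              (exp (\<i> * (complex_of_real \<theta> + 2 * pi * a / of_nat n)))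
              (exp (\<i> * (complex_of_real \<theta> + 2 * pi * b / of_nat n)))
           / CD_kernel (sparse_verblunsky v N) n
              (exp (\<i> * complex_of_real \<theta>)) (exp (\<i> * complex_of_real \<theta>))) x)
           ((\<lambda>(\<theta>, a, b). sine_kernel (a - cnj b)) x) < e"
        unfolding eventually_sequentially
      proof (intro exI[of _ "max (Suc (N j0)) n1"] allI impI ballI)
        fix n x assume n: "n \<ge> max (Suc (N j0)) n1" and x: "x \<in> {0..<2*pi} \<times> C \<times> C"
        obtain \<theta> a b where xe: "x = (\<theta>, a, b)" and aC: "a \<in> C" and bC: "b \<in> C"
          using x by auto
        have ab: "cmod a \<le> R" "cmod b \<le> R" using R aC bC by auto
        obtain j where j: "j \<ge> j0" "N j < n" "n \<le> N (Suc j)"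
          using block_exists[OF sm, of j0 n] j0ge n by auto
        have j2': "j \<ge> 2" using j j0ge by simp
        have good: "Good v (map N [1..<j]) n" using gb[OF j2'] j by simp
        have jj1: "real j \<ge> real j1" using j by (simp add: j0_def)
        have Rj: "R \<le> real (j - 1)" using j1 jj1 j2' by (simp add: of_nat_diff)
        have vj: "cmod (v j) < \<delta>" using j2 j by (simp add: j0_def)
        have vh: "cmod (v j) \<le> 1/2" using vj by (simp add: \<delta>_def)
        have j16: "4 / real j \<le> 1/4" using j1 jj1 by (simp add: field_simps)
        have vW: "12 * cmod (v j) * W \<le> 1/4"
        proof -
          have "cmod (v j) \<le> 1 / (48 * W)" using vj by (simp add: \<delta>_def)
          then have "cmod (v j) * W \<le> 1 / (48 * W) * W" using W1 by (intro mult_right_mono) auto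
          then show ?thesis using W1 by (simp add: field_simps)
        qed
        have kapeq: "1 / real j + 3 * (1 / real j + 4 * cmod (v j) * W) = 4 / real j + 12 * cmod (v j) * W"
          by (simp add: algebra_simps)
        have kap: "1 / real j + 3 * (1 / real j + 4 * cmod (v j) * (1 + exp (2 * pi * R))) \<le> 1/2"
          using kapeq j16 vW unfolding W_def by linarith
        define \<zeta> where "\<zeta> = exp (\<i> * complex_of_real \<theta>)"
        define s where "s = a - cnj b"
        define A where "A = (\<Sum>k<n. shift n s ^ k) / of_nat n"
        define ratio where "ratio = CD_kernel (sparse_verblunsky v N) n (\<zeta> * shift n a) (\<zeta> * shift n b)
            / CD_kernel (sparse_verblunsky v N) n \<zeta> \<zeta>"
        have B1: "cmod (ratio - A) \<le> 4 * Q * (1 / real j + 3 * (1 / real j + 4 * cmod (v j) * W))"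
          using block_est[OF sm assms(1) j2' j(2,3) good R(1) Rj ab vh kap, of \<theta>]
          unfolding ratio_def A_def s_def \<zeta>_def Q_def W_def .
        have B1': "4 * Q * (1 / real j + 3 * (1 / real j + 4 * cmod (v j) * W)) < e / 2"
        proof -
          have a1: "16 * Q / real j < e / 4"
          proof -
            have "real j > 64 * Q / e" using j1 jj1 by simp
            then have "64 * Q < e * real j" using e by (simp add: divide_less_eq mult.commute)
            then show ?thesis using j2' by (simp add: divide_less_eq field_simps)
          qed
          have a2: "48 * Q * cmod (v j) * W < e / 4"
          proof -
            have "cmod (v j) < e / (192 * Q * W)" using vj by (simp add: \<delta>_def)
            then have "cmod (v j) * (192 * Q * W) < e" using Q1 W1 by (simp add: less_divide_eq)
            then show ?thesis by (simp add: algebra_simps)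
          qed
          have "4 * Q * (1 / real j + 3 * (1 / real j + 4 * cmod (v j) * W))
              = 16 * Q / real j + 48 * Q * cmod (v j) * W" by (simp add: algebra_simps)
          then show ?thesis using a1 a2 by linarith
        qed
        define t where "t = 2 * complex_of_real pi * \<i> * s"
        have st: "shift n s = exp (t / of_nat n)" by (simp add: shift_def t_def)
        have n0: "n > 0" using j by simp
        have geo: "A * Ef (t / of_nat n) = Ef t"
          using geom_Ef[OF n0, of t] n0 unfolding A_def st by (simp add: field_simps)
        have Anorm: "cmod A \<le> Q"
        proof -
          have sb: "cmod s \<le> 2 * R" using ab norm_triangle_ineq4[of a "cnj b"] by (simp add: s_def)
          have "cmod (\<Sum>k<n. shift n s ^ k) \<le> (\<Sum>k<n. Q)"
            using shift_pow_bound(1)[of _ n s "2 * R"] sb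
            by (intro order.trans[OF norm_sum] sum_mono) (auto simp: norm_power Q_def)
          then show ?thesis using n0 unfolding A_def by (simp add: norm_divide field_simps)
        qed
        have tn: "cmod (t / of_nat n) < d"
        proof -
          have sb: "cmod s \<le> 2 * R" using ab norm_triangle_ineq4[of a "cnj b"] by (simp add: s_def)
          have "cmod (t / of_nat n) = 2 * pi * cmod s / n" by (simp add: t_def norm_mult norm_divide)
          also have "\<dots> \<le> 4 * pi * R / n" using sb n0 by (intro divide_right_mono) auto
          also have "\<dots> \<le> 4 * pi * R / n1"
          proof -
            have "4 * pi * R / d \<ge> 0" using R(1) d by simp
            then have p: "real n1 > 0" using n1 by linarith
            have "n1 \<le> n" using n by simp
            then show ?thesis using p R(1) by (intro divide_left_mono) auto
          qed
          also have "\<dots> < d"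
          proof -
            have "4 * pi * R / d \<ge> 0" using R(1) d by simp
            then have p: "real n1 > 0" using n1 by linarith
            then show ?thesis using n1 d by (simp add: divide_less_eq mult.commute)
          qed
          finally show ?thesis .
        qed
        have B2: "cmod (A - Ef t) < e / 2"
        proof -
          have "A - Ef t = A * (1 - Ef (t / of_nat n))" using geo by (simp add: algebra_simps)
          then have "cmod (A - Ef t) = cmod A * cmod (Ef (t / of_nat n) - 1)"
            by (simp add: norm_mult norm_minus_commute)
          also have "\<dots> \<le> Q * cmod (Ef (t / of_nat n) - 1)" using Anorm by (intro mult_right_mono) auto
          also have "\<dots> < Q * (e / (2 * Q))" using d(2) tn Q1 by (intro mult_strict_left_mono) auto
          also have "\<dots> = e / 2" using Q1 by simp
          finally show ?thesis .
        qed
        have sk: "sine_kernel (a - cnj b) = Ef t" unfolding t_def s_def by (rule sine_kernel_Ef)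
        have fx: "(\<lambda>(\<theta>, a, b).
           CD_kernel (sparse_verblunsky v N) n
              (exp (\<i> * (complex_of_real \<theta> + 2 * pi * a / of_nat n)))
              (exp (\<i> * (complex_of_real \<theta> + 2 * pi * b / of_nat n)))
           / CD_kernel (sparse_verblunsky v N) n
              (exp (\<i> * complex_of_real \<theta>)) (exp (\<i> * complex_of_real \<theta>))) x = ratio"
          unfolding xe ratio_def \<zeta>_def by (simp only: stmt_point prod.case)
        have lx: "(\<lambda>(\<theta>, a, b). sine_kernel (a - cnj b)) x = Ef t" unfolding xe using sk by simp
        have "cmod (ratio - Ef t) \<le> cmod (ratio - A) + cmod (A - Ef t)"
          using norm_triangle_ineq[of "ratio - A" "A - Ef t"] by simp
        then show "dist ((\<lambda>(\<theta>, a, b).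
           CD_kernel (sparse_verblunsky v N) n
              (exp (\<i> * (complex_of_real \<theta> + 2 * pi * a / of_nat n)))
              (exp (\<i> * (complex_of_real \<theta> + 2 * pi * b / of_nat n)))
           / CD_kernel (sparse_verblunsky v N) n
              (exp (\<i> * complex_of_real \<theta>)) (exp (\<i> * complex_of_real \<theta>))) x)
           ((\<lambda>(\<theta>, a, b). sine_kernel (a - cnj b)) x) < e"
          unfolding fx lx dist_norm using B1 B1' B2 by linarith
      qed
    qed
  qed
qed

end
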